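(* Let $H_1$ and $H_2$ be finitely generated groups such that $H_2$ is infinite and does not have uniform exponential growth. Then for any constants $\alpha,\beta>0$ there exists a finite generating set $U$ of $H_1\times H_2$ such that $|U^n|<(\alpha|U|)^{\beta n}$ for some $n\in\mathbb{N}$.
   Context: For a finitely generated group $G$ and finite generating set $S$, $B_S(n)$ is the ball of radius $n$ about the identity in the word metric of $S$, $\omega(G,S)=\lim_{n\to\infty}|B_S(n)|^{1/n}$ and $\omega(G)=\inf_S\omega(G,S)$ over finite generating sets; $G$ has uniform exponential growth if $\omega(G)>1$. $U^n=\{u_1\cdots u_n:u_i\in U\}$. *)

theory Defs
  imports "HOL-Analysis.Analysis" "HOL-Algebra.Algebra"
begin

fun set_pow :: "('a, 'b) monoid_scheme \<Rightarrow> 'a set \<Rightarrow> nat \<Rightarrow> 'a set" where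
  "set_pow G U 0 = {\<one>\<^bsub>G\<^esub>}"
| "set_pow G U (Suc n) = set_mult G (set_pow G U n) U"

definition fin_gen_set :: "('a, 'b) monoid_scheme \<Rightarrow> 'a set \<Rightarrow> bool" where
  "fin_gen_set G S \<longleftrightarrow> finite S \<and> S \<subseteq> carrier G \<and> generate G S = carrier G"

definition finitely_generated :: "('a, 'b) monoid_scheme \<Rightarrow> bool" where
  "finitely_generated G \<longleftrightarrow> (\<exists>S. fin_gen_set G S)"

text \<open>Ball of radius n in the word metric of S: products of at most n elements of S \<union> S^-1.\<close>
definition word_ball :: "('a, 'b) monoid_scheme \<Rightarrow> 'a set \<Rightarrow> nat \<Rightarrow> 'a set" where
  "word_ball G S n = set_pow G (insert \<one>\<^bsub>G\<^esub> (S \<union> (\<lambda>s. inv\<^bsub>G\<^esub> s) ` S)) n"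

definition growth_rate :: "('a, 'b) monoid_scheme \<Rightarrow> 'a set \<Rightarrow> real" where
  "growth_rate G S = lim (\<lambda>n. real (card (word_ball G S n)) powr (1 / real n))"

definition min_growth_rate :: "('a, 'b) monoid_scheme \<Rightarrow> real" where
  "min_growth_rate G = Inf {growth_rate G S | S. fin_gen_set G S}"

definition uniform_exp_growth :: "('a, 'b) monoid_scheme \<Rightarrow> bool" where
  "uniform_exp_growth G \<longleftrightarrow> min_growth_rate G > 1"

end

theory Submission
  imports Defs
begin

lemma subadd_iter:
  fixes b :: "nat \<Rightarrow> real"
  assumes sub: "\<And>m n. b (m+n) \<le> b m + b n" and b0: "b 0 \<le> 0"
  shows "b (q*k) \<le> real q * b k"
proof (induction q)
  case 0 then show ?case using b0 by simp
next
  case (Suc q)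
  have "b (Suc q * k) = b (k + q*k)" by simp
  also have "\<dots> \<le> b k + b (q*k)" by (rule sub)
  also have "\<dots> \<le> b k + real q * b k" using Suc by simp
  finally show ?case by (simp add: algebra_simps)
qed

lemma subadd_bound:
  fixes b :: "nat \<Rightarrow> real"
  assumes nn: "\<And>n. b n \<ge> 0" and sub: "\<And>m n. b (m+n) \<le> b m + b n" and b0: "b 0 \<le> 0"
    and k: "k \<ge> 1" and n: "n \<ge> 1"
  shows "b n / real n \<le> b k / real k + real k * b 1 / real n"
proof -
  have e: "n = (n div k) * k + n mod k" by simp
  have "b n \<le> b ((n div k) * k) + b (n mod k)" using sub e by metis
  also have "\<dots> \<le> real (n div k) * b k + real (n mod k) * b 1"
    using subadd_iter[OF sub b0, of "n div k" k] subadd_iter[OF sub b0, of "n mod k" 1] by simp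
  also have "\<dots> \<le> (real n / real k) * b k + real k * b 1"
  proof -
    have "real (n div k) \<le> real n / real k" using k
      using of_nat_div_le_of_nat[where 'a=real, of n k] by simp
    hence "real (n div k) * b k \<le> (real n / real k) * b k" using nn by (intro mult_right_mono) auto
    moreover have "real (n mod k) \<le> real k" using k by simp
    hence "real (n mod k) * b 1 \<le> real k * b 1" using nn by (simp add: mult_right_mono)
    ultimately show ?thesis by simp
  qed
  finally have "b n \<le> (real n / real k) * b k + real k * b 1" .
  hence "b n / real n \<le> ((real n / real k) * b k + real k * b 1) / real n" using n
    by (simp add: divide_right_mono)
  also have "\<dots> = b k / real k + real k * b 1 / real n" using n by (simp add: field_simps)
  finally show ?thesis .
qed

lemma subadd_convergent:
  fixes b :: "nat \<Rightarrow> real"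
  assumes nn: "\<And>n. b n \<ge> 0" and sub: "\<And>m n. b (m+n) \<le> b m + b n" and b0: "b 0 \<le> 0"
  shows "convergent (\<lambda>n. b n / real n)"
proof -
  define XS where "XS = (\<lambda>n. b n / real n) ` {n. n \<ge> 1}"
  define L where "L = Inf XS"
  have ne: "XS \<noteq> {}" unfolding XS_def by auto
  have bdd: "bdd_below XS" unfolding XS_def using nn by (intro bdd_belowI[of _ 0]) auto
  have low: "L \<le> b n / real n" if "n \<ge> 1" for n
    unfolding L_def XS_def using that bdd XS_def by (intro cInf_lower) auto
  have "(\<lambda>n. b n / real n) \<longlonglongrightarrow> L"
  proof (rule LIMSEQ_I)
    fix r :: real assume r: "r > 0"
    have "Inf XS < L + r/2" using r L_def by simp
    then obtain x where "x \<in> XS" "x < L + r/2" using cInf_lessD[OF ne] by blast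
    then obtain k where k: "k \<ge> 1" "b k / real k < L + r/2" unfolding XS_def by auto
    obtain N :: nat where N: "N > 2 * real k * b 1 / r" using reals_Archimedean2 by blast
    show "\<exists>no. \<forall>n\<ge>no. norm (b n / real n - L) < r"
    proof (intro exI allI impI)
      fix n assume nN: "n \<ge> max 1 N"
      hence n1: "n \<ge> 1" and nN': "real n \<ge> N" by auto
      have "real k * b 1 / real n < r/2"
      proof -
        have "2 * real k * b 1 / r < real n" using N nN' by linarith
        hence "2 * real k * b 1 < real n * r" using r by (simp add: divide_less_eq)
        thus ?thesis using n1 by (simp add: divide_less_eq mult_ac)
      qed
      hence "b n / real n < L + r" using subadd_bound[OF nn sub b0 k(1) n1] k(2) by linarith
      moreover have "L \<le> b n / real n" using low n1 .
      ultimately show "norm (b n / real n - L) < r" by simp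
    qed
  qed
  thus ?thesis unfolding convergent_def by blast
qed


lemma card_set_mult_le:
  assumes "finite A" "finite B"
  shows "finite (set_mult G A B) \<and> card (set_mult G A B) \<le> card A * card B"
proof -
  have e: "set_mult G A B = (\<lambda>(a,b). a \<otimes>\<^bsub>G\<^esub> b) ` (A \<times> B)"
    unfolding set_mult_def by force
  have "card (set_mult G A B) \<le> card (A \<times> B)" unfolding e by (rule card_image_le) (use assms in auto)
  also have "\<dots> = card A * card B" by (rule card_cartesian_product)
  finally show ?thesis unfolding e using assms by auto
qed

lemma set_pow_finite_card:
  assumes "finite V"
  shows "finite (set_pow G V n) \<and> card (set_pow G V n) \<le> card V ^ n"
proof (induction n)
  case 0 then show ?case by simp
next
  case (Suc n)
  then have f: "finite (set_pow G V n)" and c: "card (set_pow G V n) \<le> card V ^ n" by auto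
  have f2: "finite (set_pow G V (Suc n))" and c2: "card (set_pow G V (Suc n)) \<le> card (set_pow G V n) * card V"
    using card_set_mult_le[OF f assms, of G] by simp_all
  have "card (set_pow G V (Suc n)) \<le> card V ^ n * card V"
    using c2 c mult_le_mono1 le_trans by blast
  then show ?case using f2 by (simp add: mult.commute)
qed

lemma set_mult_DirProd:
  "set_mult (G \<times>\<times> H) (A \<times> B) (C \<times> D) = set_mult G A C \<times> set_mult H B D"
  unfolding set_mult_def by force

lemma set_pow_DirProd:
  "set_pow (G \<times>\<times> H) (A \<times> B) n = set_pow G A n \<times> set_pow H B n"
  by (induction n) (simp_all add: set_mult_DirProd)

context group
begin

lemma set_mult_carrier: "A \<subseteq> carrier G \<Longrightarrow> B \<subseteq> carrier G \<Longrightarrow> A <#> B \<subseteq> carrier G"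
  unfolding set_mult_def by auto

lemma set_pow_carrier: "V \<subseteq> carrier G \<Longrightarrow> set_pow G V n \<subseteq> carrier G"
  by (induction n) (auto simp: set_mult_carrier)

lemma set_mult_one_r: "A \<subseteq> carrier G \<Longrightarrow> A <#> {\<one>} = A"
  unfolding set_mult_def by force

lemma set_mult_one_l: "A \<subseteq> carrier G \<Longrightarrow> {\<one>} <#> A = A"
  unfolding set_mult_def by force

lemma set_pow_one: "\<one> \<in> V \<Longrightarrow> V \<subseteq> carrier G \<Longrightarrow> \<one> \<in> set_pow G V n"
proof (induction n)
  case 0 then show ?case by simp
next
  case (Suc n)
  have "\<one> \<otimes> \<one> \<in> set_pow G V n <#> V" unfolding set_mult_def using Suc by blast
  then show ?case by simp
qed

lemma set_pow_add: "V \<subseteq> carrier G \<Longrightarrow> set_pow G V (m+n) = set_pow G V m <#> set_pow G V n"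
proof (induction n)
  case 0 then show ?case using set_pow_carrier[OF 0] by (simp add: set_mult_one_r)
next
  case (Suc n)
  have "set_pow G V (m + Suc n) = set_pow G V (m+n) <#> V" by simp
  also have "\<dots> = (set_pow G V m <#> set_pow G V n) <#> V" using Suc by simp
  also have "\<dots> = set_pow G V m <#> (set_pow G V n <#> V)"
    by (rule set_mult_assoc[OF set_pow_carrier[OF Suc.prems] set_pow_carrier[OF Suc.prems] Suc.prems])
  finally show ?case by simp
qed

lemma set_pow_mult: "V \<subseteq> carrier G \<Longrightarrow> set_pow G (set_pow G V m) n = set_pow G V (m*n)"
proof (induction n)
  case 0 then show ?case by simp
next
  case (Suc n)
  have "set_pow G (set_pow G V m) (Suc n) = set_pow G V (m*n) <#> set_pow G V m" using Suc by simp
  also have "\<dots> = set_pow G V (m*n + m)" using set_pow_add[OF Suc.prems] by simp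
  finally show ?case by (simp add: mult.commute add.commute)
qed

lemma set_pow_mono_Suc: "\<one> \<in> V \<Longrightarrow> V \<subseteq> carrier G \<Longrightarrow> set_pow G V n \<subseteq> set_pow G V (Suc n)"
proof
  fix x assume a: "\<one> \<in> V" "V \<subseteq> carrier G" "x \<in> set_pow G V n"
  hence "x = x \<otimes> \<one>" using subsetD[OF set_pow_carrier[OF a(2)] a(3)] by simp
  moreover have "x \<otimes> \<one> \<in> set_pow G V n <#> V" unfolding set_mult_def using a by blast
  ultimately show "x \<in> set_pow G V (Suc n)" by simp
qed

lemma set_pow_mono: "\<one> \<in> V \<Longrightarrow> V \<subseteq> carrier G \<Longrightarrow> n \<le> k \<Longrightarrow> set_pow G V n \<subseteq> set_pow G V k"
proof -
  assume a: "\<one> \<in> V" "V \<subseteq> carrier G" "n \<le> k"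
  show ?thesis using lift_Suc_mono_le[of "set_pow G V", OF set_pow_mono_Suc[OF a(1,2)] a(3)] .
qed

lemma word_ball_V:
  assumes "S \<subseteq> carrier G"
  shows "\<one> \<in> insert \<one> (S \<union> (\<lambda>s. inv s) ` S)" "insert \<one> (S \<union> (\<lambda>s. inv s) ` S) \<subseteq> carrier G"
  using assms by auto

lemma generate_in_balls:
  assumes S: "S \<subseteq> carrier G" and x: "x \<in> generate G S"
  shows "\<exists>n. x \<in> word_ball G S n"
proof -
  define V where "V = insert \<one> (S \<union> (\<lambda>s. inv s) ` S)"
  have V: "\<one> \<in> V" "V \<subseteq> carrier G" unfolding V_def using S by auto
  have V1: "set_pow G V 1 = V" using set_mult_one_l[OF V(2)] by simp
  from x show ?thesis
  proof (induction rule: generate.induct)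
    case one
    then show ?case unfolding word_ball_def by (intro exI[of _ 0]) simp
  next
    case (incl h)
    then show ?case unfolding word_ball_def V_def[symmetric] using V1 by (intro exI[of _ 1]) (simp add: V_def)
  next
    case (inv h)
    then show ?case unfolding word_ball_def V_def[symmetric] using V1 by (intro exI[of _ 1]) (simp add: V_def)
  next
    case (eng h1 h2)
    then obtain a b where "h1 \<in> set_pow G V a" "h2 \<in> set_pow G V b"
      unfolding word_ball_def V_def by blast
    hence "h1 \<otimes> h2 \<in> set_pow G V a <#> set_pow G V b" unfolding set_mult_def by blast
    hence "h1 \<otimes> h2 \<in> set_pow G V (a+b)" using set_pow_add[OF V(2)] by simp
    then show ?case unfolding word_ball_def V_def[symmetric] by blast
  qed
qed

lemma word_ball_card_lower:
  assumes fg: "fin_gen_set G S" and inf: "infinite (carrier G)"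
  shows "card (word_ball G S m) \<ge> m + 1"
proof -
  define V where "V = insert \<one> (S \<union> (\<lambda>s. inv s) ` S)"
  have S: "S \<subseteq> carrier G" "finite S" and gen: "generate G S = carrier G" using fg unfolding fin_gen_set_def by auto
  have V: "\<one> \<in> V" "V \<subseteq> carrier G" "finite V" unfolding V_def using S by auto
  have B: "word_ball G S n = set_pow G V n" for n unfolding word_ball_def V_def by simp
  have fin: "finite (set_pow G V n)" for n using set_pow_finite_card[OF V(3)] by auto
  have strict: "card (set_pow G V n) < card (set_pow G V (Suc n))" for n
  proof (rule ccontr)
    assume "\<not> ?thesis"
    hence eq: "set_pow G V (Suc n) = set_pow G V n"
      using set_pow_mono_Suc[OF V(1,2), of n] fin card_seteq by (metis linorder_not_le)
    have stay: "set_pow G V (n + k) = set_pow G V n" for k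
    proof (induction k)
      case 0 then show ?case by simp
    next
      case (Suc k)
      have "set_pow G V (n + Suc k) = set_pow G V (n+k) <#> V" by simp
      also have "\<dots> = set_pow G V (Suc n)" using Suc by simp
      finally show ?case using eq by simp
    qed
    have "carrier G \<subseteq> set_pow G V n"
    proof
      fix x assume "x \<in> carrier G"
      then obtain j where "x \<in> set_pow G V j" using generate_in_balls[OF S(1)] gen B by blast
      hence "x \<in> set_pow G V (n + j)" using set_pow_mono[OF V(1,2), of j "n+j"] by auto
      thus "x \<in> set_pow G V n" using stay by simp
    qed
    thus False using fin inf finite_subset by blast
  qed
  have "card (set_pow G V m) \<ge> m + 1"
  proof (induction m)
    case 0 then show ?case by simp
  next
    case (Suc m) then show ?case using strict[of m] by simp
  qed
  thus ?thesis using B by simp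
qed

end

lemma DirProd_fin_gen:
  assumes gG: "group G" and gH: "group H" and T: "fin_gen_set G T" and S: "fin_gen_set H S"
    and A: "T \<subseteq> A" "\<one>\<^bsub>G\<^esub> \<in> A" "A \<subseteq> carrier G" "finite A"
    and B: "S \<subseteq> B" "\<one>\<^bsub>H\<^esub> \<in> B" "B \<subseteq> carrier H" "finite B"
  shows "fin_gen_set (G \<times>\<times> H) (A \<times> B)"
proof -
  interpret G: group G by fact
  interpret H: group H by fact
  interpret P: group "G \<times>\<times> H" by (rule DirProd_group[OF gG gH])
  have Tc: "T \<subseteq> carrier G" "generate G T = carrier G" using T unfolding fin_gen_set_def by auto
  have Sc: "S \<subseteq> carrier H" "generate H S = carrier H" using S unfolding fin_gen_set_def by auto
  have sub: "A \<times> B \<subseteq> carrier (G \<times>\<times> H)" using A B by auto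
  have one_gen: "(\<one>\<^bsub>G\<^esub>, \<one>\<^bsub>H\<^esub>) \<in> generate (G \<times>\<times> H) (A \<times> B)"
    using generate.one[of "G \<times>\<times> H" "A \<times> B"] by simp
  have L: "(x, \<one>\<^bsub>H\<^esub>) \<in> generate (G \<times>\<times> H) (A \<times> B)" if "x \<in> generate G T" for x
    using that
  proof (induction rule: generate.induct)
    case one then show ?case by (rule one_gen)
  next
    case (incl h) then show ?case using A B by (intro generate.incl) auto
  next
    case (inv h)
    have hc: "h \<in> carrier G" using inv Tc by auto
    have "inv\<^bsub>G \<times>\<times> H\<^esub> (h, \<one>\<^bsub>H\<^esub>) \<in> generate (G \<times>\<times> H) (A \<times> B)"
      using inv A B by (intro generate.inv) auto
    then show ?case using inv_DirProd[OF gG gH hc H.one_closed] by simp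
  next
    case (eng h1 h2)
    have "(h1, \<one>\<^bsub>H\<^esub>) \<otimes>\<^bsub>G \<times>\<times> H\<^esub> (h2, \<one>\<^bsub>H\<^esub>) \<in> generate (G \<times>\<times> H) (A \<times> B)"
      using eng by (intro generate.eng)
    then show ?case by simp
  qed
  have R: "(\<one>\<^bsub>G\<^esub>, y) \<in> generate (G \<times>\<times> H) (A \<times> B)" if "y \<in> generate H S" for y
    using that
  proof (induction rule: generate.induct)
    case one then show ?case by (rule one_gen)
  next
    case (incl h) then show ?case using A B by (intro generate.incl) auto
  next
    case (inv h)
    have hc: "h \<in> carrier H" using inv Sc by auto
    have "inv\<^bsub>G \<times>\<times> H\<^esub> (\<one>\<^bsub>G\<^esub>, h) \<in> generate (G \<times>\<times> H) (A \<times> B)"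
      using inv A B by (intro generate.inv) auto
    then show ?case using inv_DirProd[OF gG gH G.one_closed hc] by simp
  next
    case (eng h1 h2)
    have "(\<one>\<^bsub>G\<^esub>, h1) \<otimes>\<^bsub>G \<times>\<times> H\<^esub> (\<one>\<^bsub>G\<^esub>, h2) \<in> generate (G \<times>\<times> H) (A \<times> B)"
      using eng by (intro generate.eng)
    then show ?case by simp
  qed
  have "carrier (G \<times>\<times> H) \<subseteq> generate (G \<times>\<times> H) (A \<times> B)"
  proof
    fix p assume "p \<in> carrier (G \<times>\<times> H)"
    then obtain g h where p: "p = (g, h)" "g \<in> carrier G" "h \<in> carrier H" by auto
    have "(g, \<one>\<^bsub>H\<^esub>) \<otimes>\<^bsub>G \<times>\<times> H\<^esub> (\<one>\<^bsub>G\<^esub>, h) \<in> generate (G \<times>\<times> H) (A \<times> B)"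
      using L R p Tc Sc by (intro generate.eng) auto
    then show "p \<in> generate (G \<times>\<times> H) (A \<times> B)" using p by simp
  qed
  moreover have "generate (G \<times>\<times> H) (A \<times> B) \<subseteq> carrier (G \<times>\<times> H)" by (rule P.generate_incl[OF sub])
  ultimately show ?thesis unfolding fin_gen_set_def using sub A B by auto
qed

lemma growth_tendsto:
  assumes gG: "group G" and fg: "fin_gen_set G S"
  shows "(\<lambda>N. real (card (word_ball G S N)) powr (1 / real N)) \<longlonglongrightarrow> growth_rate G S"
proof -
  interpret G: group G by fact
  define V where "V = insert \<one>\<^bsub>G\<^esub> (S \<union> (\<lambda>s. inv\<^bsub>G\<^esub> s) ` S)"
  have Sc: "S \<subseteq> carrier G" "finite S" using fg unfolding fin_gen_set_def by auto
  have V: "\<one>\<^bsub>G\<^esub> \<in> V" "V \<subseteq> carrier G" "finite V" unfolding V_def using Sc by auto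
  have B: "word_ball G S n = set_pow G V n" for n unfolding word_ball_def V_def by simp
  define a where "a N = card (set_pow G V N)" for N
  have fin: "finite (set_pow G V n)" for n using set_pow_finite_card[OF V(3)] by auto
  have a1: "real (a N) \<ge> 1" for N
  proof -
    have "set_pow G V N \<noteq> {}" using G.set_pow_one[OF V(1,2)] by auto
    hence "a N \<noteq> 0" unfolding a_def using fin by auto
    thus ?thesis by simp
  qed
  have asub: "real (a (m+n)) \<le> real (a m) * real (a n)" for m n
  proof -
    have "a (m+n) = card (set_mult G (set_pow G V m) (set_pow G V n))"
      unfolding a_def using G.set_pow_add[OF V(2)] by simp
    also have "\<dots> \<le> a m * a n" unfolding a_def using card_set_mult_le[OF fin fin] by blast
    finally show ?thesis by (metis of_nat_le_iff of_nat_mult)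
  qed
  define b where "b N = ln (real (a N))" for N
  have bnn: "b n \<ge> 0" for n unfolding b_def using a1 by simp
  have bsub: "b (m+n) \<le> b m + b n" for m n
  proof -
    have "b (m+n) \<le> ln (real (a m) * real (a n))" unfolding b_def
    proof (subst ln_le_cancel_iff)
      have p: "real (a k) > 0" for k using a1[of k] by linarith
      show "0 < real (a (m + n))" using p .
      show "0 < real (a m) * real (a n)" using p by simp
      show "real (a (m + n)) \<le> real (a m) * real (a n)" by (rule asub)
    qed
    also have "\<dots> = b m + b n" unfolding b_def using a1[of m] a1[of n] by (subst ln_mult) auto
    finally show ?thesis .
  qed
  have b0: "b 0 \<le> 0" unfolding b_def a_def by simp
  obtain l where l: "(\<lambda>n. b n / real n) \<longlonglongrightarrow> l"
    using subadd_convergent[OF bnn bsub b0] unfolding convergent_def by blast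
  have xe: "real (card (word_ball G S N)) powr (1 / real N) = exp (b N / real N)" for N
  proof -
    have "real (a N) \<noteq> 0" using a1[of N] by linarith
    thus ?thesis unfolding B a_def[symmetric] b_def powr_def by simp
  qed
  have lim: "(\<lambda>N. real (card (word_ball G S N)) powr (1 / real N)) \<longlonglongrightarrow> exp l"
    unfolding xe by (rule tendsto_exp[OF l])
  hence "growth_rate G S = exp l" unfolding growth_rate_def by (rule limI)
  thus ?thesis using lim by simp
qed

theorem proposition2p14:
  fixes H1 :: "('a, 'c) monoid_scheme" and H2 :: "('b, 'd) monoid_scheme"
  assumes "group H1" and "group H2"
    and "finitely_generated H1" and "finitely_generated H2"
    and "infinite (carrier H2)"
    and "\<not> uniform_exp_growth H2"
    and "\<alpha> > (0::real)" and "\<beta> > (0::real)"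
  shows "\<exists>U. fin_gen_set (H1 \<times>\<times> H2) U \<and>
           (\<exists>n::nat. n \<ge> 1 \<and>
              real (card (set_pow (H1 \<times>\<times> H2) U n)) < (\<alpha> * real (card U)) powr (\<beta> * real n))"
proof -
  note gH1 = assms(1) and gH2 = assms(2)
  interpret G1: group H1 by fact
  interpret G2: group H2 by fact
  have al: "\<alpha> > 0" and be: "\<beta> > 0" using assms by auto
  obtain T where T: "fin_gen_set H1 T" using assms(3) unfolding finitely_generated_def by blast
  have Tc: "T \<subseteq> carrier H1" "finite T" using T unfolding fin_gen_set_def by auto
  define W where "W = insert \<one>\<^bsub>H1\<^esub> T"
  have W: "T \<subseteq> W" "\<one>\<^bsub>H1\<^esub> \<in> W" "W \<subseteq> carrier H1" "finite W" unfolding W_def using Tc by auto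
  define c where "c = card W"
  have c1: "real c \<ge> 1" unfolding c_def using W by (simp add: Suc_le_eq card_gt_0_iff) blast
  define K where "K = (2 * real c + 1) powr (1 / \<beta>)"
  have K0: "K \<ge> 0" unfolding K_def by simp
  have Kb: "K powr \<beta> = 2 * real c + 1"
    unfolding K_def powr_powr using be c1 by (simp add: powr_one)
  obtain m0 :: nat where m0: "real m0 > K / (\<alpha> * real c)" using reals_Archimedean2 by blast
  define m where "m = max 1 m0"
  have m1: "m \<ge> 1" and mm0: "real m \<ge> real m0" unfolding m_def by auto
  have ac: "\<alpha> * real c > 0" using al c1 by simp
  have mK: "\<alpha> * real c * (real m + 1) \<ge> K"
  proof -
    have "K / (\<alpha> * real c) < real m + 1" using m0 mm0 by linarith
    hence "K < (real m + 1) * (\<alpha> * real c)" using ac by (simp add: divide_less_eq)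
    thus ?thesis by (simp add: mult_ac)
  qed
  have big: "(\<alpha> * real c * (real m + 1)) powr \<beta> \<ge> 2 * real c + 1"
    using powr_mono2[of \<beta> K "\<alpha> * real c * (real m + 1)"] be K0 mK Kb by simp
  define t where "t = (2::real) powr (1 / real m)"
  have t1: "t > 1" unfolding t_def using m1 by simp
  have ne: "{growth_rate H2 S | S. fin_gen_set H2 S} \<noteq> {}"
    using assms(4) unfolding finitely_generated_def by blast
  have "Inf {growth_rate H2 S | S. fin_gen_set H2 S} < t"
    using assms(6) t1 unfolding uniform_exp_growth_def min_growth_rate_def by simp
  then obtain S where S: "fin_gen_set H2 S" and gS: "growth_rate H2 S < t"
    using cInf_lessD[OF ne] by blast
  have Sc: "S \<subseteq> carrier H2" "finite S" using S unfolding fin_gen_set_def by auto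
  have "\<forall>\<^sub>F N in sequentially. real (card (word_ball H2 S N)) powr (1 / real N) < t"
    using order_tendstoD(2)[OF growth_tendsto[OF gH2 S] gS] .
  then obtain N0 where N0: "\<And>N. N \<ge> N0 \<Longrightarrow> real (card (word_ball H2 S N)) powr (1 / real N) < t"
    unfolding eventually_sequentially by blast
  define n where "n = max 1 N0"
  have n1: "n \<ge> 1" unfolding n_def by simp
  define N where "N = m * n"
  have NN0: "N \<ge> N0" unfolding N_def n_def using m1 by (metis le_trans max.cobounded2 mult_le_mono1 mult_1)
  have N1: "N \<ge> 1" unfolding N_def using m1 n1 by simp
  define V where "V = insert \<one>\<^bsub>H2\<^esub> (S \<union> (\<lambda>s. inv\<^bsub>H2\<^esub> s) ` S)"
  have V: "\<one>\<^bsub>H2\<^esub> \<in> V" "V \<subseteq> carrier H2" "finite V" unfolding V_def using Sc by auto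
  have BV: "word_ball H2 S k = set_pow H2 V k" for k unfolding word_ball_def V_def by simp
  define Bm where "Bm = word_ball H2 S m"
  have V1: "set_pow H2 V 1 = V" using G2.set_mult_one_l[OF V(2)] by simp
  have SBm: "S \<subseteq> Bm" unfolding Bm_def BV using G2.set_pow_mono[OF V(1,2) m1] V1 V_def by auto
  have Bm: "\<one>\<^bsub>H2\<^esub> \<in> Bm" "Bm \<subseteq> carrier H2" "finite Bm"
    unfolding Bm_def BV using G2.set_pow_one[OF V(1,2)] G2.set_pow_carrier[OF V(2)] set_pow_finite_card[OF V(3), of H2 m]
    by auto
  define U where "U = W \<times> Bm"
  have fgU: "fin_gen_set (H1 \<times>\<times> H2) U"
    unfolding U_def by (rule DirProd_fin_gen[OF gH1 gH2 T S W SBm Bm])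
  have cardU: "real (card U) \<ge> real c * (real m + 1)"
  proof -
    have "card Bm \<ge> m + 1" unfolding Bm_def by (rule G2.word_ball_card_lower[OF S assms(5)])
    hence "real (card Bm) \<ge> real m + 1" by linarith
    moreover have "card U = c * card Bm" unfolding U_def c_def by (simp add: card_cartesian_product)
    ultimately show ?thesis using c1 by (simp add: mult_left_mono)
  qed
  have Un: "set_pow (H1 \<times>\<times> H2) U n = set_pow H1 W n \<times> word_ball H2 S N"
    unfolding U_def set_pow_DirProd Bm_def BV N_def using G2.set_pow_mult[OF V(2)] by simp
  have cW: "card (set_pow H1 W n) \<le> c ^ n" unfolding c_def using set_pow_finite_card[OF W(4)] by blast
  define aN where "aN = real (card (word_ball H2 S N))"
  have aN0: "aN > 0"
  proof -
    have "\<one>\<^bsub>H2\<^esub> \<in> word_ball H2 S N" unfolding BV using G2.set_pow_one[OF V(1,2)] .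
    moreover have "finite (word_ball H2 S N)" unfolding BV using set_pow_finite_card[OF V(3)] by blast
    ultimately have "card (word_ball H2 S N) \<noteq> 0" by auto
    thus ?thesis unfolding aN_def by simp
  qed
  have aN2: "aN < 2 ^ n"
  proof -
    have x: "aN powr (1 / real N) < t" using N0[OF NN0] unfolding aN_def .
    have "aN = (aN powr (1 / real N)) powr real N" unfolding powr_powr using N1 aN0 by (simp add: powr_one)
    also have "\<dots> < t powr real N" using powr_less_mono2[OF _ _ x] N1 by simp
    also have "\<dots> = 2 powr real n" unfolding t_def powr_powr N_def using m1 by simp
    also have "\<dots> = 2 ^ n" by (simp add: powr_realpow)
    finally show ?thesis .
  qed
  have lhs: "real (card (set_pow (H1 \<times>\<times> H2) U n)) < (2 * real c) ^ n"
  proof -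
    have "real (card (set_pow (H1 \<times>\<times> H2) U n)) = real (card (set_pow H1 W n)) * aN"
      unfolding Un aN_def by (simp add: card_cartesian_product)
    also have "\<dots> \<le> real c ^ n * aN" using cW aN0 by (intro mult_right_mono) (simp_all add: of_nat_power[symmetric] del: of_nat_power)
    also have "\<dots> < real c ^ n * 2 ^ n" using aN2 c1 by (intro mult_strict_left_mono) simp_all
    also have "\<dots> = (2 * real c) ^ n" by (simp add: power_mult_distrib mult.commute)
    finally show ?thesis .
  qed
  have rhs: "(2 * real c) ^ n < (\<alpha> * real (card U)) powr (\<beta> * real n)"
  proof -
    have "(2 * real c) ^ n < (2 * real c + 1) ^ n" using c1 n1 by (intro power_strict_mono) auto
    also have "\<dots> \<le> ((\<alpha> * real c * (real m + 1)) powr \<beta>) ^ n" using big c1 by (intro power_mono) auto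
    also have "\<dots> = (\<alpha> * real c * (real m + 1)) powr (\<beta> * real n)"
    proof -
      have pos: "\<alpha> * real c * (real m + 1) > 0" using ac by simp
      hence "(\<alpha> * real c * (real m + 1)) powr \<beta> > 0" using powr_gt_zero by (metis less_irrefl)
      thus ?thesis by (simp add: powr_powr[symmetric] powr_realpow)
    qed
    also have "\<dots> \<le> (\<alpha> * real (card U)) powr (\<beta> * real n)"
    proof (rule powr_mono2)
      show "0 \<le> \<beta> * real n" using be by simp
      show "0 \<le> \<alpha> * real c * (real m + 1)" using ac by simp
      show "\<alpha> * real c * (real m + 1) \<le> \<alpha> * real (card U)" using cardU al by (simp add: mult.assoc mult_left_mono)
    qed
    finally show ?thesis .
  qed
  show ?thesis using fgU n1 lhs rhs by (intro exI[of _ U]) (auto intro: exI[of _ n])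
qed

end
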